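(* There is a universal constant $C$ such that for every $K$, $T$, every sequence of multiclass outcomes $\mathbf x\in[K]^T$ fixed in advance, and every bounded proper multiclass scoring rule $\ell\in\mathcal L$, the forecasts $\mathbf p$ produced by ForecastFTPL satisfy $\mathbb E[\mathrm{Reg}_\ell(\mathbf p,\mathbf x)]\le CK\sqrt T$, i.e. $O(K\sqrt T)$.
   Context: ForecastFTPL: for $t=1,\dots,T$: for each $i\in[K]$ sample $n_{t,i}$ independently and uniformly from $\{0,1,\dots,\lfloor\sqrt T\rfloor\}$; set $\hat X_{t,i}=n_{t,i}+\sum_{s=1}^{t-1}\mathbf 1(x_s=i)$; output $p_t\in\Delta_K$ with $p_{t,i}=\hat X_{t,i}/\sum_{j=1}^K\hat X_{t,j}$ (if the denominator is $0$, output an arbitrary fixed element of $\Delta_K$); then observe $x_t$. Here $\Delta_K$ is the probability simplex in $\mathbb R^K$, outcome $i$ identified with $e_i$. A multiclass scoring rule $\ell:\Delta_K\times[K]\to\mathbb R$, with $\ell(p;q)=\sum_iq_i\ell(p,i)$, is proper if $\ell(p;p)\le\ell(p';p)$ for all $p,p'$; $\mathcal L$ is the set of proper ones with values in $[-1,1]$. With $\beta=\frac1T\sum_te_{x_t}$, $\mathrm{Reg}_\ell(\mathbf p,\mathbf x)=\sum_t\ell(p_t,x_t)-\sum_t\ell(\beta,x_t)$. *)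

theory Defs
  imports Complex_Main "HOL-Library.FuncSet"
begin

text \<open>Outcomes [K] are identified with {0..<K}; time steps are 1..T.
  Elements of the simplex Delta_K are functions nat => real vanishing outside {0..<K}.\<close>

definition simplex :: "nat \<Rightarrow> (nat \<Rightarrow> real) set" where
  "simplex K = {p. (\<forall>i. 0 \<le> p i) \<and> (\<forall>i\<ge>K. p i = 0) \<and> (\<Sum>i<K. p i) = 1}"

definition bounded_proper :: "nat \<Rightarrow> ((nat \<Rightarrow> real) \<Rightarrow> nat \<Rightarrow> real) \<Rightarrow> bool" where
  "bounded_proper K l \<longleftrightarrow>
     (\<forall>p\<in>simplex K. \<forall>p'\<in>simplex K.
        (\<Sum>i<K. p i * l p i) \<le> (\<Sum>i<K. p i * l p' i)) \<and>
     (\<forall>p\<in>simplex K. \<forall>i<K. -1 \<le> l p i \<and> l p i \<le> 1)"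

definition ftpl_forecast ::
  "nat \<Rightarrow> (nat \<Rightarrow> nat) \<Rightarrow> (nat \<Rightarrow> real) \<Rightarrow> (nat \<times> nat \<Rightarrow> nat) \<Rightarrow> nat \<Rightarrow> (nat \<Rightarrow> real)" where
  "ftpl_forecast K x d n t =
     (let X = (\<lambda>i. real (n (t, i)) + real (card {s \<in> {1..<t}. x s = i}));
          S = (\<Sum>j<K. X j)
      in if S = 0 then d else (\<lambda>i. if i < K then X i / S else 0))"

definition empirical :: "nat \<Rightarrow> (nat \<Rightarrow> nat) \<Rightarrow> (nat \<Rightarrow> real)" where
  "empirical T x = (\<lambda>i. real (card {t \<in> {1..T}. x t = i}) / real T)"

definition regret ::
  "((nat \<Rightarrow> real) \<Rightarrow> nat \<Rightarrow> real) \<Rightarrow> nat \<Rightarrow> (nat \<Rightarrow> nat \<Rightarrow> real) \<Rightarrow> (nat \<Rightarrow> nat) \<Rightarrow> real" where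
  "regret l T p x = (\<Sum>t=1..T. l (p t) (x t)) - (\<Sum>t=1..T. l (empirical T x) (x t))"

text \<open>Sample space of the noise: all n_{t,i} in {0..floor(sqrt T)}, t in 1..T, i in [K];
  independent uniform sampling = uniform distribution on this finite product set.\<close>
definition noise_space :: "nat \<Rightarrow> nat \<Rightarrow> (nat \<times> nat \<Rightarrow> nat) set" where
  "noise_space K T = PiE ({1..T} \<times> {..<K}) (\<lambda>_. {0..nat \<lfloor>sqrt (real T)\<rfloor>})"

definition expected_regret_ftpl ::
  "nat \<Rightarrow> nat \<Rightarrow> (nat \<Rightarrow> nat) \<Rightarrow> (nat \<Rightarrow> real) \<Rightarrow> ((nat \<Rightarrow> real) \<Rightarrow> nat \<Rightarrow> real) \<Rightarrow> real" where
  "expected_regret_ftpl K T x d l =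
     (\<Sum>n\<in>noise_space K T. regret l T (ftpl_forecast K x d n) x) / real (card (noise_space K T))"

end

theory Submission
  imports Defs
begin

definition cnt :: "(nat \<Rightarrow> nat) \<Rightarrow> nat \<Rightarrow> nat \<Rightarrow> nat" where
  "cnt x t i = card {s \<in> {1..<t}. x s = i}"

definition Wt :: "(nat \<Rightarrow> nat) \<Rightarrow> (nat \<Rightarrow> nat) \<Rightarrow> nat \<Rightarrow> nat \<Rightarrow> real" where
  "Wt x v t = (\<lambda>i. real (v i) + real (cnt x t i))"

definition qf :: "nat \<Rightarrow> (nat \<Rightarrow> real) \<Rightarrow> (nat \<Rightarrow> real) \<Rightarrow> (nat \<Rightarrow> real)" where
  "qf K d w = (let S = (\<Sum>j<K. w j) in if S = 0 then d else (\<lambda>i. if i < K then w i / S else 0))"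

definition Lw :: "nat \<Rightarrow> ((nat \<Rightarrow> real) \<Rightarrow> nat \<Rightarrow> real) \<Rightarrow> (nat \<Rightarrow> real) \<Rightarrow> (nat \<Rightarrow> real) \<Rightarrow> real" where
  "Lw K l w p = (\<Sum>i<K. w i * l p i)"

lemma ftpl_eq: "ftpl_forecast K x d n t = qf K d (Wt x (\<lambda>i. n (t, i)) t)"
  unfolding ftpl_forecast_def qf_def Wt_def cnt_def Let_def by simp

lemma qf_simplex:
  assumes "\<And>i. i < K \<Longrightarrow> 0 \<le> w i" "d \<in> simplex K"
  shows "qf K d w \<in> simplex K"
proof (cases "(\<Sum>j<K. w j) = 0")
  case True thus ?thesis using assms by (simp add: qf_def)
next
  case False
  have pos: "(\<Sum>j<K. w j) > 0" using False assms sum_nonneg[of "{..<K}" w] by force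
  have "(\<Sum>i<K. (if i < K then w i / (\<Sum>j<K. w j) else 0)) = (\<Sum>i<K. w i / (\<Sum>j<K. w j))"
    by (rule sum.cong) auto
  also have "\<dots> = 1" using False by (simp add: sum_divide_distrib[symmetric])
  finally show ?thesis using False pos assms unfolding qf_def simplex_def Let_def
    by (auto intro!: divide_nonneg_pos)
qed

lemma qf_opt:
  assumes bp: "bounded_proper K l" and d: "d \<in> simplex K"
    and w: "\<And>i. i < K \<Longrightarrow> 0 \<le> w i" and p: "p \<in> simplex K"
  shows "Lw K l w (qf K d w) \<le> Lw K l w p"
proof (cases "(\<Sum>j<K. w j) = 0")
  case True
  have "\<forall>i\<in>{..<K}. w i = 0" using True w sum_nonneg_eq_0_iff[of "{..<K}" w] by auto
  thus ?thesis by (simp add: Lw_def)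
next
  case False
  define S where "S = (\<Sum>j<K. w j)"
  have pos: "S > 0" using False w sum_nonneg[of "{..<K}" w] unfolding S_def by force
  define q where "q = qf K d w"
  have qS: "q \<in> simplex K" unfolding q_def using qf_simplex[OF w d] by auto
  have qi: "\<And>i. i < K \<Longrightarrow> w i = S * q i" using False pos unfolding q_def qf_def S_def[symmetric] Let_def
    by auto
  have "(\<Sum>i<K. q i * l q i) \<le> (\<Sum>i<K. q i * l p i)" using bp qS p unfolding bounded_proper_def by blast
  hence "S * (\<Sum>i<K. q i * l q i) \<le> S * (\<Sum>i<K. q i * l p i)" using pos by simp
  hence "(\<Sum>i<K. S * q i * l q i) \<le> (\<Sum>i<K. S * q i * l p i)"
    by (simp add: sum_distrib_left mult.assoc)
  thus ?thesis unfolding Lw_def q_def[symmetric] using qi by simp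
qed

lemma cnt_1: "cnt x (Suc 0) i = 0" by (simp add: cnt_def)

lemma cnt_Suc: "1 \<le> t \<Longrightarrow> cnt x (Suc t) i = cnt x t i + (if x t = i then 1 else 0)"
proof -
  assume t: "1 \<le> t"
  have "{s \<in> {1..<Suc t}. x s = i} = (if x t = i then insert t {s \<in> {1..<t}. x s = i} else {s \<in> {1..<t}. x s = i})"
    using t less_Suc_eq by auto
  thus ?thesis unfolding cnt_def by simp
qed

lemma Wt_Suc: "1 \<le> t \<Longrightarrow> Wt x v (Suc t) = (\<lambda>i. Wt x v t i + (if x t = i then 1 else 0))"
  by (auto simp: Wt_def cnt_Suc)

lemma Wt_Suc': "1 \<le> t \<Longrightarrow> Wt x v (Suc t) = Wt x (v(x t := Suc (v (x t)))) t"
  by (auto simp: Wt_def cnt_Suc)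

lemma Wt_nonneg: "0 \<le> Wt x v t i" by (simp add: Wt_def)

lemma Lw_add: "j < K \<Longrightarrow> Lw K l (\<lambda>i. w i + (if j = i then 1 else 0)) p = Lw K l w p + l p j"
proof -
  assume j: "j < K"
  have "(\<Sum>i<K. (w i + (if j = i then 1 else 0)) * l p i) = (\<Sum>i<K. w i * l p i + (if j = i then l p i else 0))"
    by (rule sum.cong) (auto simp: distrib_right)
  also have "\<dots> = (\<Sum>i<K. w i * l p i) + l p j" using j by (simp add: sum.distrib)
  finally show ?thesis unfolding Lw_def .
qed

lemma Lw_sum:
  assumes xK: "\<forall>t\<in>{1..T}. x t < K" and m: "m \<le> T"
  shows "Lw K l (Wt x v (Suc m)) p = Lw K l (Wt x v 1) p + (\<Sum>t=1..m. l p (x t))"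
  using m
proof (induction m)
  case 0 thus ?case by simp
next
  case (Suc m)
  have xm: "x (Suc m) < K" using xK Suc.prems by auto
  have "Lw K l (Wt x v (Suc (Suc m))) p = Lw K l (Wt x v (Suc m)) p + l p (x (Suc m))"
    by (simp only: Wt_Suc[of "Suc m"] Lw_add[OF xm])
  thus ?case using Suc by simp
qed

lemma BTL:
  assumes bp: "bounded_proper K l" and d: "d \<in> simplex K"
    and xK: "\<forall>t\<in>{1..T}. x t < K" and m: "m \<le> T"
  shows "Lw K l (Wt x v 1) (qf K d (Wt x v 1)) + (\<Sum>t=1..m. l (qf K d (Wt x v (Suc t))) (x t))
     \<le> Lw K l (Wt x v (Suc m)) (qf K d (Wt x v (Suc m)))"
  using m
proof (induction m)
  case 0 thus ?case by simp
next
  case (Suc m)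
  have xm: "x (Suc m) < K" using xK Suc.prems by auto
  let ?Q = "qf K d (Wt x v (Suc (Suc m)))"
  have QS: "?Q \<in> simplex K" by (rule qf_simplex[OF _ d]) (simp add: Wt_nonneg)
  have "Lw K l (Wt x v (Suc m)) (qf K d (Wt x v (Suc m))) \<le> Lw K l (Wt x v (Suc m)) ?Q"
    by (rule qf_opt[OF bp d _ QS]) (simp add: Wt_nonneg)
  moreover have "Lw K l (Wt x v (Suc (Suc m))) ?Q = Lw K l (Wt x v (Suc m)) ?Q + l ?Q (x (Suc m))"
    by (simp only: Wt_Suc[of "Suc m"] Lw_add[OF xm])
  ultimately show ?case using Suc by simp
qed

lemma Lw_abs:
  assumes bp: "bounded_proper K l" and p: "p \<in> simplex K" and w: "\<And>i. i < K \<Longrightarrow> 0 \<le> w i"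
  shows "\<bar>Lw K l w p\<bar> \<le> (\<Sum>i<K. w i)"
proof -
  have "\<bar>Lw K l w p\<bar> \<le> (\<Sum>i<K. \<bar>w i * l p i\<bar>)" unfolding Lw_def by (rule sum_abs)
  also have "\<dots> \<le> (\<Sum>i<K. w i)"
  proof (rule sum_mono)
    fix i assume i: "i \<in> {..<K}"
    have "-1 \<le> l p i \<and> l p i \<le> 1" using bp p i unfolding bounded_proper_def by auto
    hence "\<bar>l p i\<bar> \<le> 1" by (simp add: abs_le_iff)
    thus "\<bar>w i * l p i\<bar> \<le> w i" using w[of i] i by (simp add: abs_mult mult_left_le)
  qed
  finally show ?thesis .
qed

lemma cnt_sum:
  assumes xK: "\<forall>t\<in>{1..T}. x t < K" and m: "m \<le> T"
  shows "(\<Sum>i<K. cnt x (Suc m) i) = m"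
  using m
proof (induction m)
  case 0 thus ?case by (simp add: cnt_1)
next
  case (Suc m)
  have xm: "x (Suc m) < K" using xK Suc.prems by auto
  have "(\<Sum>i<K. cnt x (Suc (Suc m)) i) = (\<Sum>i<K. cnt x (Suc m) i + (if x (Suc m) = i then 1 else 0))"
    by (rule sum.cong) (auto simp: cnt_Suc)
  also have "\<dots> = m + 1" using Suc xm by (simp add: sum.distrib)
  finally show ?case by simp
qed

lemma cnt_big: "\<forall>t\<in>{1..T}. x t < K \<Longrightarrow> K \<le> i \<Longrightarrow> cnt x (Suc T) i = 0"
proof -
  assume xK: "\<forall>t\<in>{1..T}. x t < K" and i: "K \<le> i"
  have "{s \<in> {1..<Suc T}. x s = i} = {}"
  proof (rule ccontr)
    assume "{s \<in> {1..<Suc T}. x s = i} \<noteq> {}"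
    then obtain s where "s \<in> {1..<Suc T}" "x s = i" by blast
    hence "s \<in> {1..T}" "x s = i" by auto
    thus False using xK i by fastforce
  qed
  thus ?thesis unfolding cnt_def by simp
qed

lemma empirical_eq: "empirical T x = (\<lambda>i. real (cnt x (Suc T) i) / real T)"
  unfolding empirical_def cnt_def by (simp add: atLeastLessThanSuc_atLeastAtMost)

lemma empirical_simplex:
  assumes xK: "\<forall>t\<in>{1..T}. x t < K" and T: "1 \<le> T"
  shows "empirical T x \<in> simplex K"
proof -
  have "(\<Sum>i<K. real (cnt x (Suc T) i) / real T) = real (\<Sum>i<K. cnt x (Suc T) i) / real T"
    by (simp add: sum_divide_distrib)
  also have "\<dots> = 1" using cnt_sum[OF xK order_refl] T by simp
  finally show ?thesis unfolding empirical_eq simplex_def using cnt_big[OF xK] by auto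
qed

lemma fixed_regret:
  assumes bp: "bounded_proper K l" and d: "d \<in> simplex K"
    and xK: "\<forall>t\<in>{1..T}. x t < K" and T: "1 \<le> T" and v: "\<And>i. i < K \<Longrightarrow> v i \<le> M"
  shows "(\<Sum>t=1..T. l (qf K d (Wt x v t)) (x t)) - (\<Sum>t=1..T. l (empirical T x) (x t))
     \<le> 2 * real K * real M + (\<Sum>t=1..T. l (qf K d (Wt x v t)) (x t) - l (qf K d (Wt x v (Suc t))) (x t))"
proof -
  let ?b = "empirical T x"
  have bS: "?b \<in> simplex K" by (rule empirical_simplex[OF xK T])
  have Q1S: "qf K d (Wt x v 1) \<in> simplex K" by (rule qf_simplex[OF _ d]) (simp add: Wt_nonneg)
  have b1: "Lw K l (Wt x v 1) (qf K d (Wt x v 1)) + (\<Sum>t=1..T. l (qf K d (Wt x v (Suc t))) (x t))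
     \<le> Lw K l (Wt x v (Suc T)) (qf K d (Wt x v (Suc T)))" by (rule BTL[OF bp d xK order_refl])
  have b2: "Lw K l (Wt x v (Suc T)) (qf K d (Wt x v (Suc T))) \<le> Lw K l (Wt x v (Suc T)) ?b"
    by (rule qf_opt[OF bp d _ bS]) (simp add: Wt_nonneg)
  have b3: "Lw K l (Wt x v (Suc T)) ?b = Lw K l (Wt x v 1) ?b + (\<Sum>t=1..T. l ?b (x t))"
    by (rule Lw_sum[OF xK order_refl])
  have W1: "\<And>i. Wt x v 1 i = real (v i)" by (simp add: Wt_def cnt_1)
  have sW: "(\<Sum>i<K. Wt x v 1 i) \<le> real K * real M"
  proof -
    have "(\<Sum>i<K. Wt x v 1 i) \<le> (\<Sum>i<K. real M)" by (rule sum_mono) (simp add: Wt_def cnt_1 v)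
    thus ?thesis by simp
  qed
  have a1: "\<bar>Lw K l (Wt x v 1) ?b\<bar> \<le> (\<Sum>i<K. Wt x v 1 i)" by (rule Lw_abs[OF bp bS]) (simp add: Wt_nonneg)
  have a2: "\<bar>Lw K l (Wt x v 1) (qf K d (Wt x v 1))\<bar> \<le> (\<Sum>i<K. Wt x v 1 i)" by (rule Lw_abs[OF bp Q1S]) (simp add: Wt_nonneg)
  have "(\<Sum>t=1..T. l (qf K d (Wt x v t)) (x t) - l (qf K d (Wt x v (Suc t))) (x t)) =
     (\<Sum>t=1..T. l (qf K d (Wt x v t)) (x t)) - (\<Sum>t=1..T. l (qf K d (Wt x v (Suc t))) (x t))"
    by (rule sum_subtractf)
  thus ?thesis using b1 b2 b3 a1 a2 sW by linarith
qed

lemma sum_PiE_insert: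
  assumes "a \<notin> S"
  shows "(\<Sum>n\<in>PiE (insert a S) B. f n) = (\<Sum>y\<in>B a. \<Sum>g\<in>PiE S B. f (g(a := y)))"
proof -
  have "(\<Sum>n\<in>PiE (insert a S) B. f n) = (\<Sum>n\<in>(\<lambda>(y, g). g(a := y)) ` (B a \<times> PiE S B). f n)"
    by (simp add: PiE_insert_eq)
  also have "\<dots> = (\<Sum>(y,g)\<in>B a \<times> PiE S B. f (g(a := y)))"
    by (subst sum.reindex[OF inj_combinator[OF assms]]) (simp add: case_prod_beta')
  also have "\<dots> = (\<Sum>y\<in>B a. \<Sum>g\<in>PiE S B. f (g(a := y)))"
    by (simp add: sum.cartesian_product)
  finally show ?thesis .
qed

lemma shift_bound:
  fixes f :: "('a \<Rightarrow> nat) \<Rightarrow> real"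
  assumes I: "finite I" and a: "a \<in> I" and f: "\<And>n. \<bar>f n\<bar> \<le> 1"
  shows "(\<Sum>n\<in>PiE I (\<lambda>_. {0..M}). f n - f (n(a := Suc (n a))))
     \<le> 2 * real (card (PiE I (\<lambda>_. {0..M}))) / (real M + 1)"
proof -
  define S where "S = I - {a}"
  have IS: "I = insert a S" and aS: "a \<notin> S" and fS: "finite S" using a I unfolding S_def by auto
  let ?P = "PiE S (\<lambda>_. {0..M})"
  have "(\<Sum>n\<in>PiE I (\<lambda>_. {0..M}). f n - f (n(a := Suc (n a))))
      = (\<Sum>y\<in>{0..M}. \<Sum>g\<in>?P. f (g(a := y)) - f (g(a := Suc y)))"
    unfolding IS by (subst sum_PiE_insert[OF aS]) simp
  also have "\<dots> = (\<Sum>g\<in>?P. \<Sum>y\<in>{0..M}. f (g(a := y)) - f (g(a := Suc y)))"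
    by (rule sum.swap)
  also have "\<dots> = (\<Sum>g\<in>?P. f (g(a := 0)) - f (g(a := Suc M)))"
  proof (rule sum.cong[OF refl])
    fix g
    have "(\<Sum>y\<in>{0..M}. f (g(a := y)) - f (g(a := Suc y))) = - (\<Sum>y=0..M. f (g(a := Suc y)) - f (g(a := y)))"
      by (simp add: sum_negf[symmetric])
    also have "\<dots> = f (g(a := 0)) - f (g(a := Suc M))"
      using sum_Suc_diff[of 0 M "\<lambda>y. f (g(a := y))"] by simp
    finally show "(\<Sum>y\<in>{0..M}. f (g(a := y)) - f (g(a := Suc y))) = f (g(a := 0)) - f (g(a := Suc M))" .
  qed
  also have "\<dots> \<le> (\<Sum>g\<in>?P. 2)"
  proof (rule sum_mono)
    fix g
    have "\<bar>f (g(a := 0))\<bar> \<le> 1" "\<bar>f (g(a := Suc M))\<bar> \<le> 1" by (rule f)+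
    thus "f (g(a := 0)) - f (g(a := Suc M)) \<le> 2" by (simp add: abs_le_iff)
  qed
  also have "\<dots> = 2 * real (card ?P)" by simp
  also have "card (PiE I (\<lambda>_. {0..M})) = (M + 1) * card ?P"
    unfolding IS using fS aS by (simp add: card_PiE)
  hence "2 * real (card ?P) = 2 * real (card (PiE I (\<lambda>_. {0..M}))) / (real M + 1)"
    by (simp add: field_simps)
  finally show ?thesis .
qed

lemma swap_slice:
  assumes t: "t \<in> {1..T}"
  shows "(\<Sum>n\<in>noise_space K T. h (\<lambda>i. n (t, i))) = (\<Sum>n\<in>noise_space K T. h (\<lambda>i. n (1, i)))"
proof -
  define \<sigma> where "\<sigma> = (\<lambda>(s::nat, i::nat). (if s = t then 1 else if s = 1 then t else s, i))"
  define \<phi> where "\<phi> = (\<lambda>n::nat \<times> nat \<Rightarrow> nat. n \<circ> \<sigma>)"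
  let ?N = "noise_space K T"
  let ?I = "{1..T} \<times> {..<K}"
  have ss: "\<sigma> (\<sigma> z) = z" for z by (cases z) (auto simp: \<sigma>_def)
  have sI: "\<sigma> z \<in> ?I \<longleftrightarrow> z \<in> ?I" for z using t by (cases z) (auto simp: \<sigma>_def)
  have phiN: "\<phi> n \<in> ?N" if "n \<in> ?N" for n
  proof -
    from that have n1: "\<And>z. z \<in> ?I \<Longrightarrow> n z \<in> {0..nat \<lfloor>sqrt (real T)\<rfloor>}"
      and n2: "\<And>z. z \<notin> ?I \<Longrightarrow> n z = undefined"
      unfolding noise_space_def PiE_def extensional_def by blast+
    have "\<And>z. z \<in> ?I \<Longrightarrow> n (\<sigma> z) \<in> {0..nat \<lfloor>sqrt (real T)\<rfloor>}"
      using n1 sI by blast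
    moreover have "\<And>z. z \<notin> ?I \<Longrightarrow> n (\<sigma> z) = undefined"
      using n2 sI by blast
    ultimately show ?thesis unfolding noise_space_def \<phi>_def by (auto simp: PiE_iff extensional_def)
  qed
  have pp: "\<phi> (\<phi> n) = n" for n unfolding \<phi>_def by (auto simp: ss)
  have bij: "bij_betw \<phi> ?N ?N"
    by (rule bij_betw_byWitness[where f'=\<phi>]) (auto simp: pp phiN)
  have "(\<Sum>n\<in>?N. h (\<lambda>i. n (1, i))) = (\<Sum>n\<in>?N. h (\<lambda>i. \<phi> n (1, i)))"
    by (rule sum.reindex_bij_betw[OF bij, symmetric])
  also have "\<dots> = (\<Sum>n\<in>?N. h (\<lambda>i. n (t, i)))"
    by (simp add: \<phi>_def \<sigma>_def)
  finally show ?thesis by simp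
qed

theorem theorem5p9:
  shows "\<exists>C::real. \<forall>K T (x :: nat \<Rightarrow> nat) (d :: nat \<Rightarrow> real) l.
           1 \<le> K \<longrightarrow> 1 \<le> T \<longrightarrow> (\<forall>t\<in>{1..T}. x t < K) \<longrightarrow> d \<in> simplex K \<longrightarrow>
           bounded_proper K l \<longrightarrow>
           expected_regret_ftpl K T x d l \<le> C * real K * sqrt (real T)"
proof (intro exI[of _ 4] allI impI)
  fix K T :: nat and x :: "nat \<Rightarrow> nat" and d :: "nat \<Rightarrow> real" and l
  assume K: "1 \<le> K" and T: "1 \<le> T" and xK: "\<forall>t\<in>{1..T}. x t < K" and d: "d \<in> simplex K"
    and bp: "bounded_proper K l"
  define M where "M = nat \<lfloor>sqrt (real T)\<rfloor>"
  let ?N = "noise_space K T"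
  let ?I = "{1..T} \<times> {..<K}"
  have N_def': "?N = PiE ?I (\<lambda>_. {0..M})" unfolding noise_space_def M_def by simp
  have finN: "finite ?N" unfolding N_def' by (rule finite_PiE) auto
  have cardN: "card ?N > 0"
  proof -
    have "?N \<noteq> {}" unfolding N_def' by (simp add: PiE_eq_empty_iff)
    thus ?thesis using finN by (simp add: card_gt_0_iff)
  qed
  define Q where "Q = (\<lambda>v t. qf K d (Wt x v t))"
  define Bs where "Bs = (\<Sum>t=1..T. l (empirical T x) (x t))"
  define D where "D = (\<lambda>n t. l (Q (\<lambda>i. n (1::nat, i)) t) (x t) - l (Q (\<lambda>i. n (1, i)) (Suc t)) (x t))"
  have QS: "Q v t \<in> simplex K" for v t unfolding Q_def by (rule qf_simplex[OF _ d]) (simp add: Wt_nonneg)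
  have lb: "\<bar>l (Q v t) (x t)\<bar> \<le> 1" if "t \<in> {1..T}" for v t
  proof -
    have "-1 \<le> l (Q v t) (x t) \<and> l (Q v t) (x t) \<le> 1" using bp QS xK that unfolding bounded_proper_def by blast
    thus ?thesis by (simp add: abs_le_iff)
  qed
  have vM: "(\<lambda>i. n (1, i)) i \<le> M" if "n \<in> ?N" "i < K" for n i
    using that T unfolding N_def' by (auto simp: PiE_def Pi_def)
  have "(\<Sum>n\<in>?N. regret l T (ftpl_forecast K x d n) x)
      = (\<Sum>n\<in>?N. (\<Sum>t=1..T. l (Q (\<lambda>i. n (t, i)) t) (x t)) - Bs)"
    unfolding regret_def Bs_def Q_def by (simp add: ftpl_eq)
  also have "\<dots> = (\<Sum>t=1..T. \<Sum>n\<in>?N. l (Q (\<lambda>i. n (t, i)) t) (x t)) - real (card ?N) * Bs"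
    by (simp add: sum_subtractf, rule sum.swap)
  also have "\<dots> = (\<Sum>t=1..T. \<Sum>n\<in>?N. l (Q (\<lambda>i. n (1, i)) t) (x t)) - real (card ?N) * Bs"
  proof -
    have "(\<Sum>n\<in>?N. l (Q (\<lambda>i. n (t, i)) t) (x t)) = (\<Sum>n\<in>?N. l (Q (\<lambda>i. n (1, i)) t) (x t))"
      if "t \<in> {1..T}" for t
      using swap_slice[OF that, where h="\<lambda>v. l (Q v t) (x t)" and K=K] by simp
    hence "(\<Sum>t=1..T. \<Sum>n\<in>?N. l (Q (\<lambda>i. n (t, i)) t) (x t)) = (\<Sum>t=1..T. \<Sum>n\<in>?N. l (Q (\<lambda>i. n (1, i)) t) (x t))"
      by (rule sum.cong[OF refl]) blast
    thus ?thesis by simp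
  qed
  also have "\<dots> = (\<Sum>n\<in>?N. (\<Sum>t=1..T. l (Q (\<lambda>i. n (1, i)) t) (x t)) - Bs)"
    by (simp add: sum_subtractf, rule sum.swap)
  also have "\<dots> \<le> (\<Sum>n\<in>?N. 2 * real K * real M + (\<Sum>t=1..T. D n t))"
  proof (rule sum_mono)
    fix n assume n: "n \<in> ?N"
    show "(\<Sum>t=1..T. l (Q (\<lambda>i. n (1, i)) t) (x t)) - Bs \<le> 2 * real K * real M + (\<Sum>t=1..T. D n t)"
      unfolding Bs_def D_def Q_def by (rule fixed_regret[OF bp d xK T]) (use vM[OF n] in simp)
  qed
  also have "\<dots> = real (card ?N) * (2 * real K * real M) + (\<Sum>t=1..T. \<Sum>n\<in>?N. D n t)"
    by (simp add: sum.distrib, rule sum.swap)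
  also have "(\<Sum>t=1..T. \<Sum>n\<in>?N. D n t) \<le> (\<Sum>t=1..T. 2 * real (card ?N) / (real M + 1))"
  proof (rule sum_mono)
    fix t assume t: "t \<in> {1..T}"
    define f where "f = (\<lambda>n::nat\<times>nat \<Rightarrow> nat. l (Q (\<lambda>i. n (1, i)) t) (x t))"
    have a: "(1, x t) \<in> ?I" using t T xK by auto
    have Dn: "D n t = f n - f (n((1, x t) := Suc (n (1, x t))))" for n
    proof -
      have "Q (\<lambda>i. n (1, i)) (Suc t) = Q (\<lambda>i. (n((1, x t) := Suc (n (1, x t)))) (1, i)) t"
        unfolding Q_def using t by (simp add: Wt_Suc') (rule arg_cong[where f="\<lambda>v. qf K d (Wt x v t)"], auto)
      thus ?thesis unfolding D_def f_def by simp
    qed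
    have "(\<Sum>n\<in>?N. D n t) = (\<Sum>n\<in>PiE ?I (\<lambda>_. {0..M}). f n - f (n((1, x t) := Suc (n (1, x t)))))"
      unfolding N_def' Dn ..
    also have "\<dots> \<le> 2 * real (card (PiE ?I (\<lambda>_. {0..M}))) / (real M + 1)"
      by (rule shift_bound[OF _ a]) (auto simp: f_def intro: lb[OF t])
    finally show "(\<Sum>n\<in>?N. D n t) \<le> 2 * real (card ?N) / (real M + 1)" unfolding N_def' .
  qed
  finally have main: "(\<Sum>n\<in>?N. regret l T (ftpl_forecast K x d n) x)
     \<le> real (card ?N) * (2 * real K * real M + real T * 2 / (real M + 1))"
    by (simp add: algebra_simps)
  have sT: "sqrt (real T) \<ge> 1" using T by simp
  have M1: "real M \<le> sqrt (real T)" unfolding M_def by simp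
  have M2: "sqrt (real T) \<le> real M + 1" unfolding M_def
    using real_of_int_floor_add_one_ge[of "sqrt (real T)"] by simp
  have "real T * 2 / (real M + 1) \<le> real T * 2 / sqrt (real T)"
    using M2 sT by (intro divide_left_mono) auto
  also have "\<dots> = 2 * sqrt (real T)" using sT by (simp add: field_simps real_sqrt_mult[symmetric])
  finally have B: "2 * real K * real M + real T * 2 / (real M + 1) \<le> 4 * real K * sqrt (real T)"
  proof -
    assume h: "real T * 2 / (real M + 1) \<le> 2 * sqrt (real T)"
    have "2 * real K * real M \<le> 2 * real K * sqrt (real T)" using M1 by (intro mult_left_mono) auto
    moreover have "1 * sqrt (real T) \<le> real K * sqrt (real T)" using K by (intro mult_right_mono) auto
    ultimately show ?thesis using h by linarith
  qed
  have "expected_regret_ftpl K T x d l \<le> 2 * real K * real M + real T * 2 / (real M + 1)"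
    unfolding expected_regret_ftpl_def using main cardN by (simp add: divide_le_eq mult.commute)
  thus "expected_regret_ftpl K T x d l \<le> 4 * real K * sqrt (real T)" using B by linarith
qed

end
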